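(* A strongly regular graph with parameters $(76,30,8,14)$ does not contain $K_5$ (complete graph on $5$ vertices) as a subgraph.
   Context: A graph is strongly regular with parameters $(v,k,\lambda,\mu)$ if it has $v$ vertices, is $k$-regular, adjacent vertices have exactly $\lambda$ common neighbours and distinct non-adjacent vertices have exactly $\mu$ common neighbours. *)

theory Defs
  imports Main
begin

definition simple_graph :: "'a set \<Rightarrow> ('a \<Rightarrow> 'a \<Rightarrow> bool) \<Rightarrow> bool" where
  "simple_graph V E \<longleftrightarrow> finite V \<and>
     (\<forall>x y. E x y \<longrightarrow> x \<in> V \<and> y \<in> V) \<and>
     (\<forall>x y. E x y \<longrightarrow> E y x) \<and> (\<forall>x. \<not> E x x)"

definition neighbours :: "'a set \<Rightarrow> ('a \<Rightarrow> 'a \<Rightarrow> bool) \<Rightarrow> 'a \<Rightarrow> 'a set" where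
  "neighbours V E x = {y \<in> V. E x y}"

definition strongly_regular ::
  "'a set \<Rightarrow> ('a \<Rightarrow> 'a \<Rightarrow> bool) \<Rightarrow> nat \<Rightarrow> nat \<Rightarrow> nat \<Rightarrow> nat \<Rightarrow> bool" where
  "strongly_regular V E v k lam mu \<longleftrightarrow> simple_graph V E \<and> card V = v \<and>
     (\<forall>x\<in>V. card (neighbours V E x) = k) \<and>
     (\<forall>x\<in>V. \<forall>y\<in>V. E x y \<longrightarrow> card (neighbours V E x \<inter> neighbours V E y) = lam) \<and>
     (\<forall>x\<in>V. \<forall>y\<in>V. x \<noteq> y \<and> \<not> E x y \<longrightarrow> card (neighbours V E x \<inter> neighbours V E y) = mu)"

definition contains_clique :: "'a set \<Rightarrow> ('a \<Rightarrow> 'a \<Rightarrow> bool) \<Rightarrow> nat \<Rightarrow> bool" where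
  "contains_clique V E n \<longleftrightarrow> (\<exists>C. C \<subseteq> V \<and> card C = n \<and>
     (\<forall>x\<in>C. \<forall>y\<in>C. x \<noteq> y \<longrightarrow> E x y))"

end

theory Submission
  imports Defs
begin

theorem mainTheorem8:
  fixes V :: "'a set" and E :: "'a \<Rightarrow> 'a \<Rightarrow> bool"
  assumes "strongly_regular V E 76 30 8 14"
  shows "\<not> contains_clique V E 5"
proof
  assume "contains_clique V E 5"
  then obtain C where CV: "C \<subseteq> V" and cC: "card C = 5" and cl: "\<forall>x\<in>C. \<forall>y\<in>C. x \<noteq> y \<longrightarrow> E x y"
    unfolding contains_clique_def by blast
  have sg: "simple_graph V E" and cV: "card V = 76"
    and deg: "\<forall>x\<in>V. card (neighbours V E x) = 30"
    and lam: "\<forall>x\<in>V. \<forall>y\<in>V. E x y \<longrightarrow> card (neighbours V E x \<inter> neighbours V E y) = 8"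
    using assms unfolding strongly_regular_def by auto
  have fV: "finite V" and sym: "\<And>x y. E x y \<Longrightarrow> E y x" and irr: "\<And>x. \<not> E x x"
    using sg unfolding simple_graph_def by auto
  have fC: "finite C" using CV fV finite_subset by blast
  define W where "W = V - C"
  have fW: "finite W" using fV W_def by simp
  have cW: "card W = 71" using cV cC CV fC unfolding W_def by (simp add: card_Diff_subset)
  define a where "a w = (\<Sum>x\<in>C. (of_bool (E w x) :: int))" for w
  define g where "g x y = card {w\<in>W. E w x \<and> E w y}" for x y
  have g1: "g x x = 26" if "x \<in> C" for x
  proof -
    have "{w\<in>W. E w x \<and> E w x} = neighbours V E x - C"
      unfolding W_def neighbours_def using sym by auto
    moreover have "neighbours V E x \<inter> C = C - {x}"
      unfolding neighbours_def using cl CV that irr by auto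
    moreover have "card (C - {x}) = 4" using that cC fC by simp
    moreover have "finite (neighbours V E x)" unfolding neighbours_def using fV by simp
    ultimately show ?thesis unfolding g_def
      using deg that CV fC subsetD[OF CV that] by (simp add: card_Diff_subset_Int)
  qed
  have g2: "g x y = 5" if "x \<in> C" "y \<in> C" "x \<noteq> y" for x y
  proof -
    let ?N = "neighbours V E x \<inter> neighbours V E y"
    have "{w\<in>W. E w x \<and> E w y} = ?N - C"
      unfolding W_def neighbours_def using sym by auto
    moreover have "?N \<inter> C = C - {x, y}"
      unfolding neighbours_def using cl CV that irr by auto
    moreover have "card (C - {x, y}) = 3" using that cC fC by (simp add: card_Diff_subset)
    moreover have "finite ?N" unfolding neighbours_def using fV by simp
    moreover have "card ?N = 8" using lam that CV cl by (meson subsetD)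
    ultimately show ?thesis unfolding g_def using fC by (simp add: card_Diff_subset_Int)
  qed
  have S1: "(\<Sum>w\<in>W. a w) = 130"
  proof -
    have "(\<Sum>w\<in>W. a w) = (\<Sum>x\<in>C. \<Sum>w\<in>W. (of_bool (E w x) :: int))"
      unfolding a_def by (rule sum.swap)
    also have "\<dots> = (\<Sum>x\<in>C. int (g x x))"
      using fW unfolding g_def by (intro sum.cong) (auto intro!: arg_cong[where f=card])
    also have "\<dots> = (\<Sum>x\<in>C. 26)" using g1 by simp
    finally show ?thesis using cC by simp
  qed
  have S2: "(\<Sum>w\<in>W. a w ^ 2) = 230"
  proof -
    have "(\<Sum>w\<in>W. a w ^ 2) = (\<Sum>w\<in>W. \<Sum>x\<in>C. \<Sum>y\<in>C. (of_bool (E w x \<and> E w y) :: int))"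
      unfolding a_def power2_eq_square sum_product by (simp add: of_bool_conj)
    also have "\<dots> = (\<Sum>x\<in>C. \<Sum>w\<in>W. \<Sum>y\<in>C. (of_bool (E w x \<and> E w y) :: int))"
      by (rule sum.swap)
    also have "\<dots> = (\<Sum>x\<in>C. \<Sum>y\<in>C. \<Sum>w\<in>W. (of_bool (E w x \<and> E w y) :: int))"
      by (intro sum.cong refl sum.swap)
    also have "\<dots> = (\<Sum>x\<in>C. \<Sum>y\<in>C. int (g x y))"
      using fW unfolding g_def by (intro sum.cong) (auto intro!: arg_cong[where f=card])
    also have "\<dots> = (\<Sum>x\<in>C. 46)"
    proof (rule sum.cong[OF refl])
      fix x assume x: "x \<in> C"
      have "(\<Sum>y\<in>C. int (g x y)) = int (g x x) + (\<Sum>y\<in>C-{x}. int (g x y))"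
        using x fC by (simp add: sum.remove)
      also have "(\<Sum>y\<in>C-{x}. int (g x y)) = (\<Sum>y\<in>C-{x}. 5)"
        using g2 x by (intro sum.cong) auto
      also have "\<dots> = 20" using x fC cC by simp
      finally show "(\<Sum>y\<in>C. int (g x y)) = 46" using g1 x by simp
    qed
    finally show ?thesis using cC by simp
  qed
  have "0 \<le> (\<Sum>w\<in>W. (71 * a w - 130) ^ 2)" by (intro sum_nonneg) simp
  also have "(\<Sum>w\<in>W. (71 * a w - 130) ^ 2) = (\<Sum>w\<in>W. 5041 * a w ^ 2 - 18460 * a w + 16900)"
    by (intro sum.cong) (auto simp: power2_eq_square algebra_simps)
  also have "\<dots> = 5041 * (\<Sum>w\<in>W. a w ^ 2) - 18460 * (\<Sum>w\<in>W. a w) + 16900 * int (card W)"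
    by (simp add: sum.distrib sum_subtractf sum_distrib_left)
  also have "\<dots> < 0" using S1 S2 cW by simp
  finally show False by simp
qed

end
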